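(* For $j\in\mathbb{N}$ let $G_j(v)=\frac{v^j}{1-e^{-v}}$ ($v\ne0$, extended analytically at $0$) and $\mathfrak{g}_j(v)=(e^v-1)^{j+1}G_j^{(j)}(v)$. Then the Maclaurin power series of $\mathfrak{g}_j$ is \[ \mathfrak{g}_j(v)=(j+1)!\sum_{k=0}^\infty C(j,k)\frac{v^k}{k!}, \] where \[ C(j,k)=k!\sum_{r=0}^{k}(-1)^{r+1}(r+1)(r+2)(r+j)!\,\frac{S(k-r,j+1)}{(k-r)!}\sum_{q=0}^{r+1}\frac{(-1)^q}{q+1}\,\frac{S(r+q+1,q)}{(r-q+1)!\,(r+q+1)!}. \]
   Context: $\mathbb{N}=\{1,2,3,\dots\}$. $S(n,k)$ denotes the Stirling numbers of the second kind, defined by $\frac{(e^v-1)^k}{k!}=\sum_{n=k}^\infty S(n,k)\frac{v^n}{n!}$, with $S(n,k)=0$ for $n<k$. *)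

theory Defs
  imports "HOL-Analysis.Analysis" "HOL-Combinatorics.Stirling"
begin

text \<open>G_j(v) = v^j / (1 - e^(-v)) for v \<noteq> 0, extended analytically (continuously) at 0.
  For j \<ge> 1 the value at 0 is the limit: 1 if j = 1, and 0 if j \<ge> 2.\<close>
definition G :: "nat \<Rightarrow> real \<Rightarrow> real" where
  "G j v = (if v = 0 then (if j = 1 then 1 else 0) else v ^ j / (1 - exp (- v)))"

definition g :: "nat \<Rightarrow> real \<Rightarrow> real" where
  "g j v = (exp v - 1) ^ (j + 1) * (deriv ^^ j) (G j) v"

definition C :: "nat \<Rightarrow> nat \<Rightarrow> real" where
  "C j k = fact k * (\<Sum>r = 0..k. (-1) ^ (r + 1) * real (r + 1) * real (r + 2) * fact (r + j)
      * real (Stirling (k - r) (j + 1)) / fact (k - r)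
      * (\<Sum>q = 0..r + 1. (-1) ^ q / real (q + 1)
           * real (Stirling (r + q + 1) q) / (fact (r - q + 1) * fact (r + q + 1))))"

end

theory Submission
  imports Defs "HOL-Analysis.FPS_Convergence"
begin

lemma fps_nth_conv_deriv_real:
  fixes f :: "real fps"
  assumes "fps_conv_radius f > 0"
  shows   "fps_nth f n = (deriv ^^ n) (eval_fps f) 0 / fact n"
  using assms
proof (induction n arbitrary: f)
  case 0
  thus ?case by (simp add: eval_fps_def)
next
  case (Suc n f)
  have "(deriv ^^ Suc n) (eval_fps f) 0 = (deriv ^^ n) (deriv (eval_fps f)) 0"
    unfolding funpow_Suc_right o_def ..
  also have "eventually (\<lambda>z::real. z \<in> eball 0 (fps_conv_radius f)) (nhds 0)"
    using Suc.prems by (intro eventually_nhds_in_open) (auto simp: zero_ereal_def)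
  hence "eventually (\<lambda>z. deriv (eval_fps f) z = eval_fps (fps_deriv f) z) (nhds 0)"
    by eventually_elim (simp add: eval_fps_deriv)
  hence "(deriv ^^ n) (deriv (eval_fps f)) 0 = (deriv ^^ n) (eval_fps (fps_deriv f)) 0"
    by (intro higher_deriv_cong_ev refl)
  also have "\<dots> / fact n = fps_nth (fps_deriv f) n"
    using Suc.prems fps_conv_radius_deriv[of f] 
    by (intro Suc.IH [symmetric]) auto
  also have "\<dots> / of_nat (Suc n) = fps_nth f (Suc n)"
    by (simp add: fps_deriv_def del: of_nat_Suc)
  finally show ?case by (simp add: field_split_simps)
qed

lemma fps_nth_fps_expansion_real:
  fixes f :: "real \<Rightarrow> real"
  assumes "f has_fps_expansion F"
  shows   "fps_nth F n = (deriv ^^ n) f 0 / fact n"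
proof -
  have "fps_nth F n = (deriv ^^ n) (eval_fps F) 0 / fact n"
    using assms by (intro fps_nth_conv_deriv_real) (auto simp: has_fps_expansion_def)
  also have "(deriv ^^ n) (eval_fps F) 0 = (deriv ^^ n) f 0"
    using assms by (intro higher_deriv_cong_ev) (auto simp: has_fps_expansion_def)
  finally show ?thesis .
qed

lemma higher_deriv_fps_expansion:
  assumes "f has_fps_expansion F"
  shows "(deriv ^^ n) f has_fps_expansion (fps_deriv ^^ n) F"
  using assms by (induction n) (auto intro: has_fps_expansion_deriv)

definition Dp :: "real fps" where "Dp = fps_shift 1 (1 - fps_exp (-1))"

definition GF :: "nat \<Rightarrow> real fps" where
  "GF j = fps_X ^ (j - 1) * inverse Dp"

lemma Dp_nth: "fps_nth Dp n = (-1) ^ n / fact (n + 1)"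
  by (simp add: Dp_def algebra_simps)

lemma G_expansion:
  assumes "j \<ge> 1"
  shows "G j has_fps_expansion GF j"
proof -
  have s: "subdegree (1 - fps_exp (-1) :: real fps) = 1"
    by (rule subdegreeI) (auto simp: fps_exp_def)
  have D: "(\<lambda>x::real. if x = 0 then 1 else (1 - exp (-x)) / x ^ 1) has_fps_expansion Dp"
    unfolding Dp_def
    by (rule has_fps_expansion_shift) (auto intro!: fps_expansion_intros simp: s)
  have "(\<lambda>x::real. x ^ (j - 1) * inverse (if x = 0 then 1 else (1 - exp (-x)) / x ^ 1))
        has_fps_expansion GF j"
    unfolding GF_def
    by (intro fps_expansion_intros D) (simp add: Dp_nth)
  also have "(\<lambda>x::real. x ^ (j - 1) * inverse (if x = 0 then 1 else (1 - exp (-x)) / x ^ 1)) = G j"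
  proof
    fix x :: real
    show "x ^ (j - 1) * inverse (if x = 0 then 1 else (1 - exp (-x)) / x ^ 1) = G j x"
    proof (cases "x = 0")
      case True thus ?thesis using assms by (auto simp: G_def)
    next
      case False
      have "x ^ j = x ^ (j - 1) * x" using assms
        by (metis Suc_diff_le diff_Suc_1 power_Suc2)
      thus ?thesis using False by (simp add: G_def field_simps)
    qed
  qed
  finally show ?thesis .
qed

lemma power_expansion:
  fixes F :: "real fps"
  assumes "f has_fps_expansion F"
  shows "(\<lambda>x. f x ^ n) has_fps_expansion F ^ n"
  using assms by (induction n) (auto intro!: has_fps_expansion_mult)

lemma g_expansion:
  assumes "j \<ge> 1"
  shows "g j has_fps_expansion (fps_exp 1 - 1) ^ (j + 1) * (fps_deriv ^^ j) (GF j)"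
  unfolding g_def[abs_def]
  by (intro has_fps_expansion_mult power_expansion higher_deriv_fps_expansion G_expansion assms
        fps_expansion_intros)

lemma E_nth:
  "fps_nth ((fps_exp (1::real) - 1) ^ k) n = fact k * real (Stirling n k) / fact n"
proof (induction n arbitrary: k)
  case 0
  then show ?case by (cases k) (auto simp: fps_nth_power_0)
next
  case (Suc n k)
  show ?case
  proof (cases k)
    case 0
    then show ?thesis by simp
  next
    case (Suc m)
    let ?E = "fps_exp (1::real) - 1"
    have d: "fps_deriv (?E ^ Suc m) = fps_const (of_nat (Suc m)) * (?E ^ Suc m + ?E ^ m)"
    proof -
      have "fps_deriv (?E ^ Suc m) = fps_const (of_nat (Suc m)) * fps_deriv ?E * ?E ^ m"
        by (simp only: fps_deriv_power diff_Suc_1)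
      also have "fps_deriv ?E = ?E + 1" by simp
      finally show ?thesis by (simp add: algebra_simps)
    qed
    have "fps_nth (fps_deriv (?E ^ Suc m)) n = of_nat (Suc n) * fps_nth (?E ^ Suc m) (Suc n)"
      by (simp only: fps_deriv_nth Suc_eq_plus1)
    hence "fps_nth (?E ^ Suc m) (Suc n) = fps_nth (fps_deriv (?E ^ Suc m)) n / of_nat (Suc n)"
      by (simp add: field_simps del: of_nat_Suc)
    also have "\<dots> = real (Suc m) * (fact (Suc m) * real (Stirling n (Suc m)) / fact n
                 + fact m * real (Stirling n m) / fact n) / of_nat (Suc n)"
      by (simp only: d fps_mult_left_const_nth fps_add_nth Suc.IH)
    also have "\<dots> = fact (Suc m) * real (Suc m * Stirling n (Suc m) + Stirling n m) / fact (Suc n)"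
    proof -
      have fm: "fact (Suc m) = real (Suc m) * fact m" by (rule fact_Suc)
      have fn: "fact (Suc n) = real (Suc n) * fact n" by (rule fact_Suc)
      have "(fact n :: real) > 0" by simp
      show ?thesis unfolding fm fn
        by (simp add: field_simps del: of_nat_Suc fact_Suc) (simp add: algebra_simps)
    qed
    also have "\<dots> = fact (Suc m) * real (Stirling (Suc n) (Suc m)) / fact (Suc n)"
      by (simp only: Stirling.simps)
    finally show ?thesis using Suc by simp
  qed
qed

definition ff :: "real fps" where "ff = Abs_fps (\<lambda>n. 1 / fact (n + 1))"

lemma E_eq: "fps_exp 1 - 1 = fps_X * ff"
  apply (rule fps_ext)
  subgoal for n by (cases n) (auto simp: ff_def algebra_simps)
  done

lemma ffpow_nth: "fps_nth (ff ^ q) m = fact q * real (Stirling (m + q) q) / fact (m + q)"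
proof -
  have "fps_nth ((fps_exp (1::real) - 1) ^ q) (m + q) = fps_nth (ff ^ q) m"
    by (simp add: E_eq power_mult_distrib fps_X_power_mult_nth)
  thus ?thesis by (simp add: E_nth)
qed

lemma inv_Dp: "fps_nth (inverse Dp) n = (-1) ^ n * fps_nth (inverse ff) n"
proof -
  define h where "h = Abs_fps (\<lambda>n. (-1) ^ n * fps_nth (inverse ff) n)"
  have ff0: "fps_nth ff 0 \<noteq> 0" by (simp add: ff_def)
  have "Dp * h = 1"
  proof (rule fps_ext)
    fix n
    have "fps_nth (Dp * h) n = (\<Sum>i=0..n. (-1)^n * (fps_nth ff i * fps_nth (inverse ff) (n - i)))"
      unfolding fps_mult_nth
    proof (rule sum.cong[OF refl])
      fix i assume "i \<in> {0..n}"
      hence "(-1::real)^i * (-1)^(n-i) = (-1)^n" by (simp flip: power_add)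
      thus "fps_nth Dp i * fps_nth h (n - i) = (-1)^n * (fps_nth ff i * fps_nth (inverse ff) (n - i))"
        by (simp add: Dp_nth h_def ff_def field_simps)
    qed
    also have "\<dots> = (-1)^n * fps_nth (ff * inverse ff) n"
      by (simp add: fps_mult_nth sum_distrib_left)
    also have "\<dots> = fps_nth 1 n"
      using ff0 by (simp add: inverse_mult_eq_1')
    finally show "fps_nth (Dp * h) n = fps_nth 1 n" .
  qed
  hence "inverse Dp = h" by (rule fps_inverse_unique)
  thus ?thesis by (simp add: h_def)
qed

lemma ring_ident:
  fixes x :: "'a::comm_ring_1"
  shows "x * (\<Sum>q=0..m. (-1)^q * of_nat (Suc m choose Suc q) * x^q) = 1 - (1 - x) ^ Suc m"
proof -
  have "(1 - x) ^ Suc m = (-x + 1) ^ Suc m" by simp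
  also have "\<dots> = (\<Sum>k=0..Suc m. of_nat (Suc m choose k) * (-x)^k * 1^(Suc m - k))"
    by (simp only: binomial_ring atMost_atLeast0)
  also have "\<dots> = 1 + (\<Sum>q=0..m. of_nat (Suc m choose Suc q) * (-x)^Suc q)"
    by (subst sum.atLeast0_atMost_Suc_shift) simp
  finally have "1 - (1 - x) ^ Suc m = - (\<Sum>q=0..m. of_nat (Suc m choose Suc q) * (-x)^Suc q)"
    by simp
  also have "\<dots> = (\<Sum>q=0..m. - (of_nat (Suc m choose Suc q) * (-x)^Suc q))"
    by (simp only: sum_negf)
  also have "\<dots> = (\<Sum>q=0..m. x * ((-1)^q * of_nat (Suc m choose Suc q) * x^q))"
    by (intro sum.cong refl) (simp add: power_minus[of x] algebra_simps)
  also have "\<dots> = x * (\<Sum>q=0..m. (-1)^q * of_nat (Suc m choose Suc q) * x^q)"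
    by (simp only: sum_distrib_left)
  finally show ?thesis by simp
qed

lemma inv_ff: "fps_nth (inverse ff) m =
   (\<Sum>q=0..m. (-1)^q * real (Suc m choose Suc q) * fps_nth (ff ^ q) m)"
proof -
  define S where "S = (\<Sum>q=0..m. (-1)^q * of_nat (Suc m choose Suc q) * ff^q)"
  define w where "w = Abs_fps (\<lambda>n. - 1 / fact (n + 2) :: real)"
  have ff0: "fps_nth ff 0 \<noteq> 0" by (simp add: ff_def)
  have u: "1 - ff = fps_X * w"
    apply (rule fps_ext)
    subgoal for n by (cases n) (auto simp: ff_def w_def)
    done
  have "ff * S = 1 - (1 - ff) ^ Suc m"
    unfolding S_def by (rule ring_ident)
  hence "inverse ff * (ff * S) = inverse ff * (1 - (1 - ff) ^ Suc m)" by simp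
  moreover have "inverse ff * (ff * S) = S"
    using inverse_mult_eq_1[OF ff0] by (simp only: mult.assoc[symmetric] mult_1)
  moreover have "inverse ff * (1 - (1 - ff) ^ Suc m)
       = inverse ff - fps_X ^ Suc m * (inverse ff * w ^ Suc m)"
    by (simp only: u power_mult_distrib right_diff_distrib mult_1_right mult.left_commute)
  ultimately have "S = inverse ff - fps_X ^ Suc m * (inverse ff * w ^ Suc m)"
    by simp
  moreover have "fps_nth (fps_X ^ Suc m * (inverse ff * w ^ Suc m)) m = 0"
    by (simp only: fps_X_power_mult_nth) simp
  ultimately have "fps_nth S m = fps_nth (inverse ff) m"
    by (simp only: fps_sub_nth)
  moreover have "fps_nth S m = (\<Sum>q=0..m. (-1)^q * real (Suc m choose Suc q) * fps_nth (ff ^ q) m)"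
    unfolding S_def fps_sum_nth
  proof (intro sum.cong refl)
    fix q
    have m1: "(-1::real fps) = fps_const (-1)" by simp
    have k: "(-1::real fps)^q * of_nat (Suc m choose Suc q)
           = fps_const ((-1)^q * of_nat (Suc m choose Suc q))"
      by (simp only: m1 fps_of_nat[symmetric] fps_const_power fps_const_mult)
    show "fps_nth ((-1)^q * of_nat (Suc m choose Suc q) * ff^q) m
        = (-1)^q * real (Suc m choose Suc q) * fps_nth (ff ^ q) m"
      by (simp only: k fps_mult_left_const_nth)
  qed
  ultimately show ?thesis by simp
qed

lemma deriv_pow_nth:
  "fps_nth ((fps_deriv ^^ j) (F :: real fps)) r = fps_nth F (r + j) * fact (r + j) / fact r"
proof (induction j arbitrary: r)
  case 0 then show ?case by simp
next
  case (Suc j r)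
  have "fps_nth ((fps_deriv ^^ Suc j) F) r = real (Suc r) * fps_nth ((fps_deriv ^^ j) F) (Suc r)"
    by simp
  also have "\<dots> = real (Suc r) * (fps_nth F (Suc r + j) * fact (Suc r + j) / (real (Suc r) * fact r))"
    by (simp only: Suc.IH fact_Suc[of r])
  also have "\<dots> = fps_nth F (r + Suc j) * fact (r + Suc j) / fact r"
  proof -
    have e: "Suc r + j = r + Suc j" by simp
    have nz: "real (Suc r) \<noteq> 0" by (simp only: of_nat_eq_0_iff)
    have gen: "\<And>c X Y::real. c \<noteq> 0 \<Longrightarrow> c * (X / (c * Y)) = X / Y" by simp
    show ?thesis unfolding e
      using gen[OF nz, of "fps_nth F (r + Suc j) * fact (r + Suc j)" "fact r"]
      by (simp only: mult.assoc)
  qed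
  finally show ?case .
qed

lemma GF_nth:
  assumes "j \<ge> 1"
  shows "fps_nth (GF j) (r + j) = fps_nth (inverse Dp) (r + 1)"
  using assms by (simp add: GF_def fps_X_power_mult_nth)

lemma binom_aux:
  assumes "q \<le> Suc r"
  shows "real (Suc (Suc r) choose Suc q) * fact q / fact r
       = real (r + 1) * real (r + 2) / (real (q + 1) * fact (r - q + 1))"
proof -
  have f1: "(fact (r - q + 1) :: real) = fact (Suc r - q)"
  proof (cases "q \<le> r")
    case True thus ?thesis by (simp add: Suc_diff_le)
  next
    case False hence "q = Suc r" using assms by simp
    thus ?thesis by simp
  qed
  have b: "real (Suc (Suc r) choose Suc q) = fact (Suc (Suc r)) / (fact (Suc q) * fact (Suc r - q))"
    using assms by (subst binomial_fact) auto
  have f2: "fact (Suc (Suc r)) = real (Suc (Suc r)) * (real (Suc r) * fact r)"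
    by simp
  have f3: "fact (Suc q) = real (Suc q) * fact q" by simp
  have "(fact r :: real) > 0" "(fact q :: real) > 0" "(fact (Suc r - q) :: real) > 0" by auto
  thus ?thesis unfolding b f1 f2 f3
    by (simp add: field_simps del: of_nat_Suc fact_Suc)
qed
lemma term_eq:
  assumes "j \<ge> 1"
  shows "fps_nth ((fps_exp 1 - 1) ^ (j + 1)) (k - r) * fps_nth ((fps_deriv ^^ j) (GF j)) r
    = fact (j + 1) * ((-1) ^ (r + 1) * real (r + 1) * real (r + 2) * fact (r + j)
      * real (Stirling (k - r) (j + 1)) / fact (k - r)
      * (\<Sum>q = 0..r + 1. (-1) ^ q / real (q + 1)
           * real (Stirling (r + q + 1) q) / (fact (r - q + 1) * fact (r + q + 1))))"
proof -
  define A where "A = fact (j + 1) * real (Stirling (k - r) (j + 1)) / (fact (k - r) :: real)"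
  have E: "fps_nth ((fps_exp 1 - 1) ^ (j + 1)) (k - r) = A"
    unfolding A_def by (rule E_nth)
  have H: "fps_nth ((fps_deriv ^^ j) (GF j)) r
     = (-1) ^ (r + 1) * fps_nth (inverse ff) (Suc r) * fact (r + j) / fact r"
    by (simp only: deriv_pow_nth GF_nth[OF assms] inv_Dp Suc_eq_plus1)
  have I: "fps_nth (inverse ff) (Suc r) / fact r = real (r + 1) * real (r + 2) *
      (\<Sum>q = 0..r + 1. (-1) ^ q / real (q + 1)
           * real (Stirling (r + q + 1) q) / (fact (r - q + 1) * fact (r + q + 1)))"
  proof -
    have "fps_nth (inverse ff) (Suc r) / fact r =
       (\<Sum>q=0..Suc r. (-1)^q * (real (Suc (Suc r) choose Suc q) * fact q / fact r)
            * real (Stirling (Suc r + q) q) / fact (Suc r + q))"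
      unfolding inv_ff ffpow_nth sum_divide_distrib
      by (intro sum.cong refl) (simp add: field_simps)
    also have "\<dots> = (\<Sum>q=0..Suc r. real (r + 1) * real (r + 2) * ((-1) ^ q / real (q + 1)
           * real (Stirling (r + q + 1) q) / (fact (r - q + 1) * fact (r + q + 1))))"
    proof (intro sum.cong refl)
      fix q assume "q \<in> {0..Suc r}"
      hence q: "q \<le> Suc r" by simp
      have e: "Suc r + q = r + q + 1" by simp
      show "(-1)^q * (real (Suc (Suc r) choose Suc q) * fact q / fact r)
            * real (Stirling (Suc r + q) q) / fact (Suc r + q)
          = real (r + 1) * real (r + 2) * ((-1) ^ q / real (q + 1)
           * real (Stirling (r + q + 1) q) / (fact (r - q + 1) * fact (r + q + 1)))"
        unfolding binom_aux[OF q] e by (simp add: field_simps)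
    qed
    also have "\<dots> = real (r + 1) * real (r + 2) *
      (\<Sum>q = 0..r + 1. (-1) ^ q / real (q + 1)
           * real (Stirling (r + q + 1) q) / (fact (r - q + 1) * fact (r + q + 1)))"
      by (simp only: sum_distrib_left Suc_eq_plus1)
    finally show ?thesis .
  qed
  define Inn where "Inn = (\<Sum>q = 0..r + 1. (-1) ^ q / real (q + 1)
           * real (Stirling (r + q + 1) q) / (fact (r - q + 1) * fact (r + q + 1)))"
  have I': "fps_nth (inverse ff) (Suc r) / fact r = real (r + 1) * real (r + 2) * Inn"
    using I unfolding Inn_def .
  have "A * ((-1) ^ (r + 1) * fps_nth (inverse ff) (Suc r) * fact (r + j) / fact r)
      = A * ((-1) ^ (r + 1) * fact (r + j) * (fps_nth (inverse ff) (Suc r) / fact r))"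
    by (simp add: algebra_simps)
  also have "\<dots> = fact (j + 1) * ((-1) ^ (r + 1) * real (r + 1) * real (r + 2) * fact (r + j)
      * real (Stirling (k - r) (j + 1)) / fact (k - r) * Inn)"
    unfolding I' A_def by (simp add: field_simps)
  finally show ?thesis unfolding E H Inn_def .
qed

theorem theorem8p1:
  fixes j :: nat
  assumes "j \<ge> 1"
  shows "\<forall>k. (deriv ^^ k) (g j) 0 / fact k = fact (j + 1) * C j k / fact k"
proof
  fix k
  let ?E = "(fps_exp 1 - 1 :: real fps) ^ (j + 1)"
  let ?H = "(fps_deriv ^^ j) (GF j)"
  have "(deriv ^^ k) (g j) 0 / fact k = fps_nth (?E * ?H) k"
    using fps_nth_fps_expansion_real[OF g_expansion[OF assms]] by simp
  also have "\<dots> = (\<Sum>i=0..k. fps_nth ?E i * fps_nth ?H (k - i))"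
    by (simp only: fps_mult_nth)
  also have "\<dots> = (\<Sum>r=0..k. fps_nth ?E (k - r) * fps_nth ?H r)"
    by (subst sum.atLeastAtMost_rev) (intro sum.cong refl, simp)
  also have "\<dots> = (\<Sum>r = 0..k. fact (j + 1) * ((-1) ^ (r + 1) * real (r + 1) * real (r + 2) * fact (r + j)
      * real (Stirling (k - r) (j + 1)) / fact (k - r)
      * (\<Sum>q = 0..r + 1. (-1) ^ q / real (q + 1)
           * real (Stirling (r + q + 1) q) / (fact (r - q + 1) * fact (r + q + 1)))))"
    by (intro sum.cong refl term_eq assms)
  also have "\<dots> = fact (j + 1) * (\<Sum>r = 0..k. (-1) ^ (r + 1) * real (r + 1) * real (r + 2) * fact (r + j)
      * real (Stirling (k - r) (j + 1)) / fact (k - r)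
      * (\<Sum>q = 0..r + 1. (-1) ^ q / real (q + 1)
           * real (Stirling (r + q + 1) q) / (fact (r - q + 1) * fact (r + q + 1))))"
    by (rule sum_distrib_left[symmetric])
  also have "\<dots> = fact (j + 1) * C j k / fact k"
    by (simp add: C_def)
  finally show "(deriv ^^ k) (g j) 0 / fact k = fact (j + 1) * C j k / fact k" .
qed

end
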